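(* If $G$ is a tightly closed graph on $[n]$, then $NC_G$ is graded.
   Context: Graphs are finite simple graphs with vertex set $[n]$; edges are written $ij$ with $i<j$. Two edges $a_1a_2$ and $b_1b_2$ cross if $a_1<b_1<a_2<b_2$ or $b_1<a_1<b_2<a_2$. A bond of $G$ is a spanning subgraph (identified with its edge set) each of whose connected components is an induced subgraph of $G$; it is noncrossing if there are no two distinct components with vertex sets $B,B'$ and $a,c\in B$, $b,d\in B'$, $a<b<c<d$. $NC_G$ is the poset of noncrossing bonds ordered by inclusion of edge sets. Two crossing edges $e,f$ are crossing closed if among all induced connected subgraphs of $G$ containing $e$ and $f$ there is a unique minimal one under containment, denoted $J(e,f)$; $G$ is crossing closed if all pairs of crossing edges are. $G$ is tightly closed if it is crossing closed and for all crossing edges $e,f$, $J(e,f)$ is a subgraph of $K_4$. *)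

theory Defs
  imports Main
begin

definition simple_graph :: "nat \<Rightarrow> (nat \<times> nat) set \<Rightarrow> bool" where
  "simple_graph n E \<longleftrightarrow> E \<subseteq> {(i,j). 1 \<le> i \<and> i < j \<and> j \<le> n}"

definition adj :: "(nat \<times> nat) set \<Rightarrow> nat \<Rightarrow> nat \<Rightarrow> bool" where
  "adj F u v \<longleftrightarrow> (u,v) \<in> F \<or> (v,u) \<in> F"

definition same_comp :: "(nat \<times> nat) set \<Rightarrow> nat \<Rightarrow> nat \<Rightarrow> bool" where
  "same_comp F = (adj F)\<^sup>*\<^sup>*"

(* bond: spanning subgraph each of whose components is an induced subgraph of G *)
definition is_bond :: "nat \<Rightarrow> (nat \<times> nat) set \<Rightarrow> (nat \<times> nat) set \<Rightarrow> bool" where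
  "is_bond n E F \<longleftrightarrow> F \<subseteq> E \<and> (\<forall>i j. (i,j) \<in> E \<and> same_comp F i j \<longrightarrow> (i,j) \<in> F)"

definition noncrossing_bond :: "nat \<Rightarrow> (nat \<times> nat) set \<Rightarrow> (nat \<times> nat) set \<Rightarrow> bool" where
  "noncrossing_bond n E F \<longleftrightarrow> is_bond n E F \<and>
     \<not> (\<exists>a b c d. a \<in> {1..n} \<and> b \<in> {1..n} \<and> c \<in> {1..n} \<and> d \<in> {1..n} \<and>
          a < b \<and> b < c \<and> c < d \<and> same_comp F a c \<and> same_comp F b d \<and> \<not> same_comp F a b)"

(* NC_G as a set of edge sets, ordered by inclusion *)
definition NC :: "nat \<Rightarrow> (nat \<times> nat) set \<Rightarrow> (nat \<times> nat) set set" where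
  "NC n E = {F. noncrossing_bond n E F}"

definition crosses :: "nat \<times> nat \<Rightarrow> nat \<times> nat \<Rightarrow> bool" where
  "crosses e f \<longleftrightarrow> (case e of (a1,a2) \<Rightarrow> case f of (b1,b2) \<Rightarrow>
      (a1 < b1 \<and> b1 < a2 \<and> a2 < b2) \<or> (b1 < a1 \<and> a1 < b2 \<and> b2 < a2))"

definition induced_connected :: "nat \<Rightarrow> (nat \<times> nat) set \<Rightarrow> nat set \<Rightarrow> bool" where
  "induced_connected n E S \<longleftrightarrow> S \<subseteq> {1..n} \<and> S \<noteq> {} \<and>
     (\<forall>u\<in>S. \<forall>v\<in>S. (\<lambda>x y. x \<in> S \<and> y \<in> S \<and> adj E x y)\<^sup>*\<^sup>* u v)"

definition conn_cands :: "nat \<Rightarrow> (nat \<times> nat) set \<Rightarrow> nat \<times> nat \<Rightarrow> nat \<times> nat \<Rightarrow> nat set set" where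
  "conn_cands n E e f = {S. induced_connected n E S \<and> fst e \<in> S \<and> snd e \<in> S \<and> fst f \<in> S \<and> snd f \<in> S}"

definition minimal_cand :: "nat \<Rightarrow> (nat \<times> nat) set \<Rightarrow> nat \<times> nat \<Rightarrow> nat \<times> nat \<Rightarrow> nat set \<Rightarrow> bool" where
  "minimal_cand n E e f S \<longleftrightarrow> S \<in> conn_cands n E e f \<and> (\<forall>T\<in>conn_cands n E e f. T \<subseteq> S \<longrightarrow> T = S)"

definition crossing_closed_pair :: "nat \<Rightarrow> (nat \<times> nat) set \<Rightarrow> nat \<times> nat \<Rightarrow> nat \<times> nat \<Rightarrow> bool" where
  "crossing_closed_pair n E e f \<longleftrightarrow> (\<exists>!S. minimal_cand n E e f S)"

(* vertex set of J(e,f); J(e,f) is the induced subgraph of G on it *)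
definition J :: "nat \<Rightarrow> (nat \<times> nat) set \<Rightarrow> nat \<times> nat \<Rightarrow> nat \<times> nat \<Rightarrow> nat set" where
  "J n E e f = (THE S. minimal_cand n E e f S)"

definition crossing_closed :: "nat \<Rightarrow> (nat \<times> nat) set \<Rightarrow> bool" where
  "crossing_closed n E \<longleftrightarrow> (\<forall>e\<in>E. \<forall>f\<in>E. crosses e f \<longrightarrow> crossing_closed_pair n E e f)"

(* a simple graph is a subgraph of K4 iff it has at most 4 vertices *)
definition tightly_closed :: "nat \<Rightarrow> (nat \<times> nat) set \<Rightarrow> bool" where
  "tightly_closed n E \<longleftrightarrow> crossing_closed n E \<and>
     (\<forall>e\<in>E. \<forall>f\<in>E. crosses e f \<longrightarrow> card (J n E e f) \<le> 4)"

definition is_chain :: "'a set set \<Rightarrow> 'a set set \<Rightarrow> bool" where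
  "is_chain P C \<longleftrightarrow> C \<subseteq> P \<and> (\<forall>x\<in>C. \<forall>y\<in>C. x \<subseteq> y \<or> y \<subseteq> x)"

definition is_maximal_chain :: "'a set set \<Rightarrow> 'a set set \<Rightarrow> bool" where
  "is_maximal_chain P C \<longleftrightarrow> is_chain P C \<and> (\<forall>D. is_chain P D \<and> C \<subseteq> D \<longrightarrow> D = C)"

definition graded :: "'a set set \<Rightarrow> bool" where
  "graded P \<longleftrightarrow> (\<forall>C D. is_maximal_chain P C \<and> is_maximal_chain P D \<longrightarrow> card C = card D)"

end

theory Submission
  imports Defs
begin

lemma adj_sym: "adj F u v = adj F v u"
  by (auto simp: adj_def)

lemma sc_refl[simp]: "same_comp F u u"
  by (simp add: same_comp_def)

lemma sc_sym: "same_comp F u v \<Longrightarrow> same_comp F v u"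
  unfolding same_comp_def
proof (induction rule: rtranclp_induct)
  case base then show ?case by simp
next
  case (step y z)
  then have "adj F z y" by (simp add: adj_sym)
  then show ?case using step(3) by (meson converse_rtranclp_into_rtranclp)
qed

lemma sc_trans: "same_comp F u v \<Longrightarrow> same_comp F v w \<Longrightarrow> same_comp F u w"
  unfolding same_comp_def by (rule rtranclp_trans)

lemma sc_mono: "F \<subseteq> F' \<Longrightarrow> same_comp F u v \<Longrightarrow> same_comp F' u v"
  unfolding same_comp_def
  by (erule rtranclp_mono[THEN predicate2D, rotated]) (auto simp: adj_def)

lemma sc_edge: "(u,v) \<in> F \<Longrightarrow> same_comp F u v"
  unfolding same_comp_def by (rule r_into_rtranclp) (simp add: adj_def)

lemma sc_adj: "adj F u v \<Longrightarrow> same_comp F u v"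
  unfolding same_comp_def by (rule r_into_rtranclp)

lemma adj_range: "simple_graph n E \<Longrightarrow> F \<subseteq> E \<Longrightarrow> adj F u v \<Longrightarrow> u \<in> {1..n} \<and> v \<in> {1..n} \<and> u \<noteq> v"
  unfolding simple_graph_def adj_def by auto

lemma sc_range: assumes "simple_graph n E" "F \<subseteq> E" "same_comp F u v" "u \<noteq> v"
  shows "u \<in> {1..n} \<and> v \<in> {1..n}"
proof -
  have "u = v \<or> (u \<in> {1..n} \<and> v \<in> {1..n})"
    using assms(3) unfolding same_comp_def
  proof (induction rule: rtranclp_induct)
    case base then show ?case by simp
  next
    case (step y z) then show ?case using adj_range[OF assms(1,2) step(2)] by auto
  qed
  then show ?thesis using assms(4) by auto
qed

lemma bond_eq: "is_bond n E F \<Longrightarrow> F = {(i,j). (i,j) \<in> E \<and> same_comp F i j}"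
  unfolding is_bond_def using sc_edge by auto

lemma path_exit: assumes "r\<^sup>*\<^sup>* a b" "P a" "\<not> P b"
  shows "\<exists>u v. r\<^sup>*\<^sup>* a u \<and> r u v \<and> P u \<and> \<not> P v"
  using assms
proof (induction rule: rtranclp_induct)
  case base then show ?case by simp
next
  case (step y z)
  show ?case
  proof (cases "P y")
    case True then show ?thesis using step by blast
  next
    case False then show ?thesis using step by (meson rtranclp.rtrancl_into_rtrancl)
  qed
qed

definition sepS :: "nat set \<Rightarrow> nat \<Rightarrow> nat \<Rightarrow> bool" where
  "sepS C x y \<longleftrightarrow> (\<exists>c1\<in>C. \<exists>c2\<in>C. c1 < c2 \<and> ((c1 < x \<and> x < c2) \<noteq> (c1 < y \<and> y < c2)))"

lemma sepS_sym: "sepS C x y = sepS C y x"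
  unfolding sepS_def by blast

lemma sepS_trans: "\<not> sepS C x y \<Longrightarrow> \<not> sepS C y z \<Longrightarrow> \<not> sepS C x z"
  unfolding sepS_def by blast

lemma lt_aux: "\<not>(a < b \<and> b < c) \<Longrightarrow> b < z \<Longrightarrow> z < c \<Longrightarrow> b \<noteq> a \<Longrightarrow> b < (a::nat)"
  by linarith
lemma gt_aux: "\<not>(a < b \<and> b < c) \<Longrightarrow> a < z \<Longrightarrow> z < b \<Longrightarrow> b \<noteq> c \<Longrightarrow> c < (b::nat)"
  by linarith

lemma F2: assumes "\<not> sepS D x y" "sepS D x c" "c \<in> C" "\<forall>c'\<in>C. \<not> sepS D c c'" "sepS C x y"
  "x \<notin> C" "y \<notin> C" "x \<notin> D" "y \<notin> D" "C \<inter> D = {}"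
  shows False
proof -
  obtain d1 d2 where d: "d1 \<in> D" "d2 \<in> D" "d1 < d2" "(d1 < x \<and> x < d2) \<noteq> (d1 < c \<and> c < d2)"
    using assms(2) unfolding sepS_def by blast
  obtain c1 c2 where c: "c1 \<in> C" "c2 \<in> C" "c1 < c2" "(c1 < x \<and> x < c2) \<noteq> (c1 < y \<and> y < c2)"
    using assms(5) unfolding sepS_def by blast
  have 1: "(d1 < x \<and> x < d2) = (d1 < y \<and> y < d2)" using assms(1) d unfolding sepS_def by blast
  have 2: "(d1 < c \<and> c < d2) = (d1 < c1 \<and> c1 < d2)" using assms(4) d c unfolding sepS_def by blast
  have 3: "(d1 < c \<and> c < d2) = (d1 < c2 \<and> c2 < d2)" using assms(4) d c unfolding sepS_def by blast
  have ne: "x \<noteq> c1" "x \<noteq> c2" "y \<noteq> c1" "y \<noteq> c2" "x \<noteq> d1" "x \<noteq> d2" "y \<noteq> d1" "y \<noteq> d2"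
    "c1 \<noteq> d1" "c1 \<noteq> d2" "c2 \<noteq> d1" "c2 \<noteq> d2" "c \<noteq> d1" "c \<noteq> d2" "x \<noteq> c" "y \<noteq> c"
    using assms(3,6-10) c d by auto
  show False
  proof (cases "d1 < x \<and> x < d2")
    case True
    then have y: "d1 < y" "y < d2" using 1 by auto
    have nc: "\<not>(d1 < c1 \<and> c1 < d2)" "\<not>(d1 < c2 \<and> c2 < d2)" using True d 2 3 by auto
    show False
    proof (cases "c1 < x \<and> x < c2")
      case True2: True
      have "c1 < d1" using lt_aux[OF nc(1)] ne True True2 by blast
      moreover have "d2 < c2" using gt_aux[OF nc(2)] ne True True2 by blast
      ultimately have "c1 < y \<and> y < c2" using y by auto
      then show False using c(4) True2 by auto
    next
      case False2: False
      then have yc: "c1 < y" "y < c2" using c(4) by auto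
      have "c1 < d1" using lt_aux[OF nc(1)] ne y yc by blast
      moreover have "d2 < c2" using gt_aux[OF nc(2)] ne y yc by blast
      ultimately show False using False2 True by auto
    qed
  next
    case False
    then have cc: "d1 < c" "c < d2" using d(4) by auto
    then have "\<not> (d1 < y \<and> y < d2)" using 1 False by auto
    moreover have "d1 < c1" "c1 < d2" "d1 < c2" "c2 < d2" using 2 3 cc by auto
    ultimately show False using c(3,4) False by auto
  qed
qed

lemma F3: assumes "c \<in> C" "y \<in> Y" "sepS C x y" "sepS Y x c"
  "\<forall>c'\<in>C. \<not> sepS Y c c'" "\<forall>y'\<in>Y. \<not> sepS C y y'" "x \<notin> C" "x \<notin> Y" "C \<inter> Y = {}"
  shows False
proof -
  obtain d1 d2 where d: "d1 \<in> Y" "d2 \<in> Y" "d1 < d2" "(d1 < x \<and> x < d2) \<noteq> (d1 < c \<and> c < d2)"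
    using assms(4) unfolding sepS_def by blast
  obtain c1 c2 where c: "c1 \<in> C" "c2 \<in> C" "c1 < c2" "(c1 < x \<and> x < c2) \<noteq> (c1 < y \<and> y < c2)"
    using assms(3) unfolding sepS_def by blast
  have 2: "(d1 < c \<and> c < d2) = (d1 < c1 \<and> c1 < d2)" using assms(5) d c unfolding sepS_def by blast
  have 3: "(d1 < c \<and> c < d2) = (d1 < c2 \<and> c2 < d2)" using assms(5) d c unfolding sepS_def by blast
  have 4: "(c1 < y \<and> y < c2) = (c1 < d1 \<and> d1 < c2)" using assms(6) d c unfolding sepS_def by blast
  have 5: "(c1 < y \<and> y < c2) = (c1 < d2 \<and> d2 < c2)" using assms(6) d c unfolding sepS_def by blast
  have ne: "x \<noteq> c1" "x \<noteq> c2" "x \<noteq> d1" "x \<noteq> d2" 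
    "c1 \<noteq> d1" "c1 \<noteq> d2" "c2 \<noteq> d1" "c2 \<noteq> d2" "c \<noteq> d1" "c \<noteq> d2" "x \<noteq> c" "y \<noteq> c1" "y \<noteq> c2"
    using assms(1,2,7-9) c d by auto
  show False
  proof (cases "d1 < c \<and> c < d2")
    case True
    then have "\<not> (d1 < x \<and> x < d2)" using d(4) by auto
    have cc: "d1 < c1" "c1 < d2" "d1 < c2" "c2 < d2" using 2 3 True by auto
    then have "\<not> (c1 < d1 \<and> d1 < c2)" by auto
    then have "\<not> (c1 < y \<and> y < c2)" using 4 by auto
    then have "c1 < x" "x < c2" using c(4) by auto
    then show False using cc \<open>\<not> (d1 < x \<and> x < d2)\<close> by auto
  next
    case False
    then have xd: "d1 < x" "x < d2" using d(4) by auto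
    have nc: "\<not>(d1 < c1 \<and> c1 < d2)" "\<not>(d1 < c2 \<and> c2 < d2)" using False 2 3 by auto
    show False
    proof (cases "c1 < x \<and> x < c2")
      case True2: True
      have "c1 < d1" using lt_aux[OF nc(1)] ne xd True2 by blast
      moreover have "d2 < c2" using gt_aux[OF nc(2)] ne xd True2 by blast
      ultimately have "c1 < y \<and> y < c2" using 4 xd by auto
      then show False using c(4) True2 by auto
    next
      case False2: False
      then have yc: "c1 < y" "y < c2" using c(4) by auto
      then have "c1 < d1" "d2 < c2" using 4 5 by auto
      then show False using False2 xd by auto
    qed
  qed
qed


lemma path_exit2: fixes P :: "'a \<Rightarrow> bool" assumes "r\<^sup>*\<^sup>* a b" "P a \<noteq> P b"
  shows "\<exists>u v. r\<^sup>*\<^sup>* a u \<and> r u v \<and> P u \<noteq> P v"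
proof -
  have "\<exists>u v. r\<^sup>*\<^sup>* a u \<and> r u v \<and> P u \<and> \<not> P v" if "P a" "\<not> P b"
    using path_exit[of r a b P] assms that by auto
  moreover have "\<exists>u v. r\<^sup>*\<^sup>* a u \<and> r u v \<and> \<not> P u \<and> P v" if "\<not> P a" "P b"
    using path_exit[of r a b "\<lambda>w. \<not> P w"] assms that by auto
  ultimately show ?thesis using assms(2) by blast
qed

lemma adj_orient: "simple_graph n E \<Longrightarrow> adj E a b \<Longrightarrow> (min a b, max a b) \<in> E"
  unfolding simple_graph_def adj_def by (auto simp: min_def max_def)

lemma chord_sym: assumes "(c1::nat) < c2" "x \<noteq> y" "c1 \<noteq> x" "c1 \<noteq> y" "c2 \<noteq> x" "c2 \<noteq> y"
  "(c1 < x \<and> x < c2) \<noteq> (c1 < y \<and> y < c2)"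
  shows "(min x y < c1 \<and> c1 < max x y) \<noteq> (min x y < c2 \<and> c2 < max x y)"
  using assms by (cases "x < y"; auto simp: min_def max_def)

lemma crosses_lem: assumes "(lo::nat) < hi" "s \<noteq> t" "s \<noteq> lo" "s \<noteq> hi" "t \<noteq> lo" "t \<noteq> hi"
  "(lo < s \<and> s < hi) \<noteq> (lo < t \<and> t < hi)"
  shows "crosses (lo,hi) (min s t, max s t)"
  using assms by (cases "s < t"; auto simp: crosses_def min_def max_def)


definition reps :: "nat \<Rightarrow> (nat \<times> nat) set \<Rightarrow> nat set" where
  "reps n F = {i \<in> {1..n}. \<forall>j. same_comp F i j \<longrightarrow> i \<le> j}"

lemma finite_reps: "finite (reps n F)" unfolding reps_def by auto

locale ctx =
  fixes n :: nat and E F :: "(nat \<times> nat) set"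
  assumes sg: "simple_graph n E" and tc: "tightly_closed n E" and ncb: "noncrossing_bond n E F"
begin

abbreviation R where "R \<equiv> same_comp F"

definition cls where "cls z = {w. R z w}"

lemma mem_cls[simp]: "w \<in> cls z \<longleftrightarrow> R z w"
  by (simp add: cls_def)

lemma FE: "F \<subseteq> E" using ncb unfolding noncrossing_bond_def is_bond_def by auto

lemma R_range: "R u v \<Longrightarrow> u \<noteq> v \<Longrightarrow> u \<in> {1..n} \<and> v \<in> {1..n}"
  using sc_range[OF sg FE] by blast

lemma Rs: "R u v \<Longrightarrow> R v u" by (rule sc_sym)
lemma Rt: "R u v \<Longrightarrow> R v w \<Longrightarrow> R u w" by (rule sc_trans)

lemma ncR: assumes "a < b" "b < c" "c < d" "R a c" "R b d" shows "R a b"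
proof -
  have "a \<in> {1..n}" "c \<in> {1..n}" using R_range[OF assms(4)] assms by auto
  moreover have "b \<in> {1..n}" "d \<in> {1..n}" using R_range[OF assms(5)] assms by auto
  ultimately show ?thesis using ncb assms unfolding noncrossing_bond_def by blast
qed

lemma nc_sep: assumes "\<not> R b a" "R a c" "R a c'" shows "\<not> sepS (cls b) c c'"
proof
  assume "sepS (cls b) c c'"
  then obtain d1 d2 where d0: "d1 \<in> cls b" "d2 \<in> cls b" "d1 < d2" "(d1 < c \<and> c < d2) \<noteq> (d1 < c' \<and> c' < d2)"
    unfolding sepS_def by blast
  then have d: "R b d1" "R b d2" "d1 < d2" "(d1 < c \<and> c < d2) \<noteq> (d1 < c' \<and> c' < d2)" by auto
  have Rdd: "R d1 d2" using d by (meson Rs Rt)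
  have Rcc: "R c c'" "R c' c" using assms by (meson Rs Rt)+
  have nR: "\<not> R c d1" "\<not> R c' d1" "\<not> R d1 c" "\<not> R d1 c'" "\<not> R c' d2" "\<not> R c d2"
    using assms d by (meson Rs Rt)+
  then have ne: "c \<noteq> d1" "c' \<noteq> d1" "c' \<noteq> d2" "c \<noteq> d2" by auto
  show False
  proof (cases "d1 < c \<and> c < d2")
    case True
    then have "\<not> (d1 < c' \<and> c' < d2)" using d(4) by auto
    then have "c' < d1 \<or> d2 < c'" using ne by linarith
    then show False
    proof
      assume "c' < d1" then show False using ncR[of c' d1 c d2] True Rcc Rdd nR by auto
    next
      assume "d2 < c'" then show False using ncR[of d1 c d2 c'] True Rcc Rdd nR by auto
    qed
  next
    case False
    then have T: "d1 < c'" "c' < d2" using d(4) by auto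
    then have "c < d1 \<or> d2 < c" using ne False by linarith
    then show False
    proof
      assume "c < d1" then show False using ncR[of c d1 c' d2] T Rcc Rdd nR by auto
    next
      assume "d2 < c" then show False using ncR[of d1 c' d2 c] T Rcc Rdd nR by auto
    qed
  qed
qed

definition sepV where "sepV x y = {z \<in> {1..n}. \<not> R z x \<and> \<not> R z y \<and> sepS (cls z) x y}"

lemma sepV_sym: "sepV x y = sepV y x"
  unfolding sepV_def using sepS_sym by blast

lemma finite_sepV: "finite (sepV x y)"
  unfolding sepV_def by auto

lemma sub: assumes "\<not> R u ov" "\<not> R z u" "\<not> R z ov" "sepS (cls z) u ov" "R z w" "q \<in> sepV u w"
  shows "q \<in> sepV u ov"
proof -
  have q: "q \<in> {1..n}" "\<not> R q u" "\<not> R q w" "sepS (cls q) u w" using assms(6) unfolding sepV_def by auto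
  have nqo: "\<not> R q ov"
  proof
    assume "R q ov"
    then have eq: "cls q = cls ov" unfolding cls_def by (auto dest: Rs Rt)
    show False
    proof (rule F3[of w "cls z" ov "cls ov" u])
      show "w \<in> cls z" using assms(5) by simp
      show "ov \<in> cls ov" by simp
      show "sepS (cls z) u ov" by fact
      show "sepS (cls ov) u w" using q(4) eq by simp
      show "\<forall>c'\<in>cls z. \<not> sepS (cls ov) w c'"
      proof
        fix c' assume "c' \<in> cls z"
        moreover have "\<not> R ov z" using assms(3) Rs by blast
        ultimately show "\<not> sepS (cls ov) w c'" using nc_sep[of ov z w c'] assms(5) by simp
      qed
      show "\<forall>y'\<in>cls ov. \<not> sepS (cls z) ov y'"
        using nc_sep[of z ov ov] assms(3) by auto
      show "u \<notin> cls z" using assms(2) by simp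
      show "u \<notin> cls ov" using assms(1) Rs by auto
      show "cls z \<inter> cls ov = {}" using assms(3) by auto (meson Rs Rt)
    qed
  qed
  have "sepS (cls q) u ov"
  proof (rule ccontr)
    assume a: "\<not> sepS (cls q) u ov"
    have nqz: "\<not> R q z" using assms(5) q(3) by (meson Rt)
    show False
    proof (rule F2[of "cls q" u ov w "cls z"])
      show "\<not> sepS (cls q) u ov" by fact
      show "sepS (cls q) u w" by fact
      show "w \<in> cls z" using assms(5) by simp
      show "\<forall>c'\<in>cls z. \<not> sepS (cls q) w c'" using nc_sep[of q z w] nqz assms(5) by auto
      show "sepS (cls z) u ov" by fact
      show "u \<notin> cls z" "ov \<notin> cls z" using assms(2,3) by auto
      show "u \<notin> cls q" "ov \<notin> cls q" using q(2) nqo by auto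
      show "cls z \<inter> cls q = {}" using nqz by auto (meson Rs Rt)
    qed
  qed
  then show ?thesis using q nqo unfolding sepV_def by auto
qed

lemma J_props: assumes "e \<in> E" "f \<in> E" "crosses e f"
  shows "induced_connected n E (J n E e f) \<and> fst e \<in> J n E e f \<and> snd e \<in> J n E e f
    \<and> fst f \<in> J n E e f \<and> snd f \<in> J n E e f \<and> card (J n E e f) \<le> 4"
proof -
  have "crossing_closed_pair n E e f" "card (J n E e f) \<le> 4"
    using tc assms unfolding tightly_closed_def crossing_closed_def by auto
  then have "\<exists>!S. minimal_cand n E e f S" unfolding crossing_closed_pair_def by simp
  then have "minimal_cand n E e f (J n E e f)"
    unfolding J_def by (rule theI')
  then show ?thesis using \<open>card (J n E e f) \<le> 4\<close>
    unfolding minimal_cand_def conn_cands_def by auto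
qed

lemma descent: assumes ax: "adj E x y" and nxy: "\<not> R x y" and z: "z \<in> sepV x y"
  shows "\<exists>u w s t. adj E u w \<and> \<not> R u w \<and> sepV u w \<subset> sepV x y \<and> (u = x \<or> u = y) \<and> R z w
     \<and> R z s \<and> R z t \<and> s \<noteq> x \<and> s \<noteq> y \<and> t \<noteq> x \<and> t \<noteq> y
     \<and> (min x y < s \<and> s < max x y) \<noteq> (min x y < t \<and> t < max x y)"
proof -
  have zz: "z \<in> {1..n}" "\<not> R z x" "\<not> R z y" "sepS (cls z) x y" using z unfolding sepV_def by auto
  have xy: "x \<noteq> y" using nxy by auto
  obtain c1 c2 where c: "c1 \<in> cls z" "c2 \<in> cls z" "c1 < c2" "(c1 < x \<and> x < c2) \<noteq> (c1 < y \<and> y < c2)"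
    using zz(4) unfolding sepS_def by blast
  have Rc: "R z c1" "R z c2" using c by auto
  have cne: "c1 \<noteq> x" "c1 \<noteq> y" "c2 \<noteq> x" "c2 \<noteq> y" using Rc zz by auto
  define lo where "lo = min x y"
  define hi where "hi = max x y"
  have P12: "(lo < c1 \<and> c1 < hi) \<noteq> (lo < c2 \<and> c2 < hi)"
    using chord_sym[OF c(3) xy cne c(4)] unfolding lo_def hi_def by simp
  have "R c1 c2" using Rc by (meson Rs Rt)
  then have "(adj F)\<^sup>*\<^sup>* c1 c2" unfolding same_comp_def .
  from path_exit2[of "adj F" c1 c2 "\<lambda>w. lo < w \<and> w < hi", OF this P12]
  obtain s t where st: "(adj F)\<^sup>*\<^sup>* c1 s" "adj F s t" "(lo < s \<and> s < hi) \<noteq> (lo < t \<and> t < hi)"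
    by blast
  have "R c1 s" using st(1) unfolding same_comp_def .
  then have Rst: "R z s" "R z t" using Rc sc_adj[OF st(2)] by (meson Rt)+
  have sne: "s \<noteq> x" "s \<noteq> y" "t \<noteq> x" "t \<noteq> y" using Rst zz by auto
  have stne: "s \<noteq> t" using st(3) by auto
  have eE: "(lo, hi) \<in> E" using adj_orient[OF sg ax] unfolding lo_def hi_def .
  have "adj E s t" using st(2) FE unfolding adj_def by auto
  then have fE: "(min s t, max s t) \<in> E" using adj_orient[OF sg] by blast
  have lohi: "lo < hi" using xy unfolding lo_def hi_def by auto
  have lohi2: "lo = x \<and> hi = y \<or> lo = y \<and> hi = x" unfolding lo_def hi_def by auto
  have cr: "crosses (lo, hi) (min s t, max s t)"
    using crosses_lem[OF lohi stne _ _ _ _ st(3)] sne lohi2 by auto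
  define JJ where "JJ = J n E (lo, hi) (min s t, max s t)"
  have Jp: "induced_connected n E JJ" "lo \<in> JJ" "hi \<in> JJ" "min s t \<in> JJ" "max s t \<in> JJ" "card JJ \<le> 4"
    using J_props[OF eE fE cr] unfolding JJ_def by auto
  have finJ: "finite JJ" using Jp(1) unfolding induced_connected_def by (meson finite_atLeastAtMost finite_subset)
  have sub4: "{x, y, s, t} \<subseteq> JJ" using Jp lohi2 by (auto simp: min_def max_def split: if_splits)
  have "card {x, y, s, t} = 4" using xy sne stne by auto
  then have Jeq: "{x, y, s, t} = JJ" using card_seteq[OF finJ sub4] Jp(6) by auto
  have "(\<lambda>a b. a \<in> JJ \<and> b \<in> JJ \<and> adj E a b)\<^sup>*\<^sup>* x s"
    using Jp(1) Jeq unfolding induced_connected_def by auto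
  from path_exit[OF this, of "\<lambda>w. w = x \<or> w = y"]
  obtain a b where ab: "a \<in> JJ" "b \<in> JJ" "adj E a b" "a = x \<or> a = y" "\<not> (b = x \<or> b = y)"
    using sne by auto
  have bst: "b = s \<or> b = t" using ab(2,5) Jeq by auto
  have Rzb: "R z b" using bst Rst by auto
  have nab: "\<not> R a b" using ab(4) Rzb zz by (meson Rs Rt)
  have subs: "sepV a b \<subseteq> sepV x y"
  proof
    fix q assume q: "q \<in> sepV a b"
    show "q \<in> sepV x y"
    proof (cases "a = x")
      case True
      then show ?thesis using sub[of x y z b q] nxy zz Rzb q by auto
    next
      case False
      then have "a = y" using ab(4) by auto
      then have "q \<in> sepV y x" using sub[of y x z b q] nxy zz Rzb q sepS_sym Rs by metis
      then show ?thesis using sepV_sym by auto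
    qed
  qed
  have "z \<notin> sepV a b" using Rzb unfolding sepV_def by auto
  then have "sepV a b \<subset> sepV x y" using subs z by auto
  then show ?thesis using ab nab Rzb Rst sne st(3) unfolding lo_def hi_def by blast
qed


lemma exists_good:
  assumes Tcl: "\<forall>i j. i \<in> T \<longrightarrow> R i j \<longrightarrow> j \<in> T"
  and Tcr: "\<forall>u v s t. adj E u v \<longrightarrow> u \<in> T \<longrightarrow> v \<in> T \<longrightarrow> R s t \<longrightarrow> s \<noteq> u \<longrightarrow> s \<noteq> v
      \<longrightarrow> t \<noteq> u \<longrightarrow> t \<noteq> v \<longrightarrow> (min u v < s \<and> s < max u v) \<noteq> (min u v < t \<and> t < max u v) \<longrightarrow> s \<in> T"
  shows "adj E x y \<Longrightarrow> x \<in> T \<Longrightarrow> y \<in> T \<Longrightarrow> \<not> R x y \<Longrightarrow>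
     \<exists>u v. adj E u v \<and> u \<in> T \<and> v \<in> T \<and> \<not> R u v \<and> sepV u v = {}"
proof (induction "card (sepV x y)" arbitrary: x y rule: less_induct)
  case less
  show ?case
  proof (cases "sepV x y = {}")
    case True then show ?thesis using less.prems by blast
  next
    case False
    then obtain z where z: "z \<in> sepV x y" by blast
    from descent[OF less.prems(1) less.prems(4) z] obtain u w s t where d:
      "adj E u w" "\<not> R u w" "sepV u w \<subset> sepV x y" "u = x \<or> u = y" "R z w"
      "R z s" "R z t" "s \<noteq> x" "s \<noteq> y" "t \<noteq> x" "t \<noteq> y"
      "(min x y < s \<and> s < max x y) \<noteq> (min x y < t \<and> t < max x y)" by blast
    have uT: "u \<in> T" using d(4) less.prems by auto
    have "R s t" using d(6,7) by (meson Rs Rt)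
    then have sT: "s \<in> T" using Tcr less.prems(1,2,3) d(8,9,10,11,12) by blast
    have "R s w" using d(5,6) by (meson Rs Rt)
    then have wT: "w \<in> T" using Tcl sT by blast
    have "card (sepV u w) < card (sepV x y)" using psubset_card_mono[OF finite_sepV d(3)] .
    then show ?thesis using less.hyps[OF _ d(1) uT wT d(2)] by blast
  qed
qed

lemma sep_class: assumes "sepS (cls b) a c" "R a a'" "R c c'" "\<not> R b a" "\<not> R b c"
  shows "sepS (cls b) a' c'"
proof -
  have 1: "\<not> sepS (cls b) a a'" using nc_sep[of b a a a'] assms by auto
  have 2: "\<not> sepS (cls b) c c'" using nc_sep[of b c c c'] assms by auto
  show ?thesis using assms(1) 1 2 unfolding sepS_def by blast
qed

lemma least_rep: assumes "x \<in> {1..n}"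
  shows "(LEAST j. R x j) \<in> reps n F \<and> R x (LEAST j. R x j) \<and> (\<forall>j. R x j \<longrightarrow> (LEAST j. R x j) \<le> j)"
proof -
  define r where "r = (LEAST j. R x j)"
  have Rxr: "R x r" unfolding r_def by (rule LeastI[of _ x]) simp
  have le: "\<forall>j. R x j \<longrightarrow> r \<le> j" unfolding r_def by (auto intro: Least_le)
  have "r \<le> x" using le by simp
  have "r \<in> {1..n}"
  proof (cases "r = x")
    case True then show ?thesis using assms by simp
  next
    case False then show ?thesis using R_range[OF Rxr] by auto
  qed
  moreover have "\<forall>j. R r j \<longrightarrow> r \<le> j" using le Rxr by (meson Rt)
  ultimately have "r \<in> reps n F" unfolding reps_def by auto
  then show ?thesis using Rxr le unfolding r_def by auto
qed

lemma adjE_range: "adj E x y \<Longrightarrow> x \<in> {1..n} \<and> y \<in> {1..n} \<and> x \<noteq> y"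
  using adj_range[OF sg, of E] by auto

lemma merge_exists: assumes ax: "adj E x y" and nxy: "\<not> R x y" and sv: "sepV x y = {}"
  shows "\<exists>F2. noncrossing_bond n E F2 \<and> F \<subset> F2 \<and> card (reps n F2) + 1 = card (reps n F) \<and>
     (\<forall>i j. same_comp F2 i j \<longrightarrow> R i j \<or> ((R x i \<or> R y i) \<and> (R x j \<or> R y j)))"
proof -
  define M where "M = {w. R x w \<or> R y w}"
  define F2 where "F2 = F \<union> {(i,j). (i,j) \<in> E \<and> i \<in> M \<and> j \<in> M}"
  have Mcl: "i \<in> M \<Longrightarrow> R i j \<Longrightarrow> j \<in> M" for i j unfolding M_def using sc_trans[of F _ i j] by blast
  have FF2: "F \<subseteq> F2" unfolding F2_def by auto
  have F2E: "F2 \<subseteq> E" unfolding F2_def using FE by auto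
  have xM: "x \<in> M" "y \<in> M" unfolding M_def by auto
  have exy: "(min x y, max x y) \<in> E" using adj_orient[OF sg ax] .
  have exy2: "(min x y, max x y) \<in> F2" using exy xM unfolding F2_def by (auto simp: min_def max_def)
  have scxy: "same_comp F2 x y"
  proof -
    have "same_comp F2 (min x y) (max x y)" using sc_edge[OF exy2] .
    then show ?thesis by (cases "x \<le> y") (auto simp: min_def max_def dest: sc_sym)
  qed
  have sc1: "same_comp F2 i j \<longleftrightarrow> (R i j \<or> (i \<in> M \<and> j \<in> M))" for i j
  proof
    assume "same_comp F2 i j"
    then show "R i j \<or> (i \<in> M \<and> j \<in> M)" unfolding same_comp_def
    proof (induction rule: rtranclp_induct)
      case base then show ?case by (simp add: same_comp_def)
    next
      case (step j k)
      have "R j k \<or> (j \<in> M \<and> k \<in> M)"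
      proof -
        have "(j,k) \<in> F2 \<or> (k,j) \<in> F2" using step(2) unfolding adj_def .
        then show ?thesis unfolding F2_def using sc_edge sc_sym by auto
      qed
      then show ?case using step(3) Mcl unfolding same_comp_def[symmetric]
        by (meson Rs Rt)
    qed
  next
    assume "R i j \<or> (i \<in> M \<and> j \<in> M)"
    then show "same_comp F2 i j"
    proof
      assume "R i j" then show ?thesis using sc_mono[OF FF2] by blast
    next
      assume ij: "i \<in> M \<and> j \<in> M"
      have "same_comp F2 x i \<or> same_comp F2 y i" using ij sc_mono[OF FF2] unfolding M_def by blast
      moreover have "same_comp F2 x j \<or> same_comp F2 y j" using ij sc_mono[OF FF2] unfolding M_def by blast
      ultimately show ?thesis using scxy by (meson sc_sym sc_trans)
    qed
  qed
  have bond: "is_bond n E F2"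
    unfolding is_bond_def
  proof (intro conjI allI impI)
    show "F2 \<subseteq> E" by fact
    fix i j assume a: "(i, j) \<in> E \<and> same_comp F2 i j"
    then have "R i j \<or> (i \<in> M \<and> j \<in> M)" using sc1 by blast
    then show "(i, j) \<in> F2"
    proof
      assume "R i j" then have "(i,j) \<in> F" using ncb a unfolding noncrossing_bond_def is_bond_def by blast
      then show ?thesis using FF2 by auto
    next
      assume "i \<in> M \<and> j \<in> M" then show ?thesis using a unfolding F2_def by auto
    qed
  qed
  have ncM: "same_comp F2 a b"
    if abcd: "a < b" "b < c" "c < d" "same_comp F2 a c" "same_comp F2 b d" "b \<in> {1..n}" "a \<in> {1..n}" for a b c d
  proof (rule ccontr)
    assume nab': "\<not> same_comp F2 a b"
    then have nab: "\<not> R a b" "\<not> (a \<in> M \<and> b \<in> M)" using sc1 by auto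
    have ac: "R a c \<or> (a \<in> M \<and> c \<in> M)" and bd: "R b d \<or> (b \<in> M \<and> d \<in> M)" using abcd sc1 by auto
    show False
    proof (cases "a \<in> M")
      case True
      then have bM: "b \<notin> M" using nab by auto
      then have Rbd: "R b d" using bd by auto
      have cM: "c \<in> M" using ac True Mcl by auto
      show False
      proof (cases "R a c")
        case True then show False using ncR[OF abcd(1,2,3) True Rbd] nab by auto
      next
        case False
        have sp: "sepS (cls b) a c"
        proof -
          have "b \<in> cls b" "d \<in> cls b" "b < d" "\<not> (b < a \<and> a < d)" "b < c \<and> c < d"
            using abcd Rbd by auto
          then show ?thesis unfolding sepS_def by blast
        qed
        have nba: "\<not> R b a" "\<not> R b c" using bM True cM Mcl by (meson Rs)+
        have A: "R x a \<or> R y a" "R x c \<or> R y c" using True cM unfolding M_def by auto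
        have B: "\<not> (R x a \<and> R x c)" "\<not> (R y a \<and> R y c)" using False by (meson Rs Rt)+
        have "(R x a \<and> R y c) \<or> (R y a \<and> R x c)" using A B by blast
        then have "sepS (cls b) x y"
          using sep_class[OF sp _ _ nba] sepS_sym Rs by metis
        moreover have "\<not> R b x" "\<not> R b y" using bM xM Mcl Rs by blast+
        ultimately have "b \<in> sepV x y" using abcd(6) unfolding sepV_def by auto
        then show False using sv by auto
      qed
    next
      case False
      then have Rac: "R a c" using ac by auto
      have cM: "c \<notin> M" using Rac False Mcl Rs by blast
      show False
      proof (cases "b \<in> M")
        case False
        then have "R b d" using bd by auto
        then show False using ncR[OF abcd(1,2,3) Rac] nab by auto
      next
        case True
        then have dM: "d \<in> M" using bd Mcl by auto
        show False
        proof (cases "R b d")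
          case True then show False using ncR[OF abcd(1,2,3) Rac] nab by auto
        next
          case nbd: False
          have sp: "sepS (cls a) b d"
          proof -
            have "a \<in> cls a" "c \<in> cls a" "a < c" "a < b \<and> b < c" "\<not> (a < d \<and> d < c)"
              using abcd Rac by auto
            then show ?thesis unfolding sepS_def by blast
          qed
          have nab2: "\<not> R a b" "\<not> R a d" using False True dM Mcl by (meson Rs)+
          have A: "R x b \<or> R y b" "R x d \<or> R y d" using True dM unfolding M_def by auto
          have B: "\<not> (R x b \<and> R x d)" "\<not> (R y b \<and> R y d)" using nbd by (meson Rs Rt)+
          have "(R x b \<and> R y d) \<or> (R y b \<and> R x d)" using A B by blast
          then have "sepS (cls a) x y"
            using sep_class[OF sp _ _ nab2] sepS_sym Rs by metis
          moreover have "\<not> R a x" "\<not> R a y" using False xM Mcl Rs by blast+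
          ultimately have "a \<in> sepV x y" using abcd(7) unfolding sepV_def by auto
          then show False using sv by auto
        qed
      qed
    qed
  qed
  have ncb2: "noncrossing_bond n E F2"
    unfolding noncrossing_bond_def using bond ncM by blast
  have "(min x y, max x y) \<notin> F"
  proof
    assume "(min x y, max x y) \<in> F"
    then have "R (min x y) (max x y)" by (rule sc_edge)
    then show False using nxy by (cases "x \<le> y") (auto simp: min_def max_def dest: Rs)
  qed
  then have strict: "F \<subset> F2" using FF2 exy2 by auto
  have xr: "x \<in> {1..n}" "y \<in> {1..n}" using adjE_range[OF ax] by auto
  define rx where "rx = (LEAST j. R x j)"
  define ry where "ry = (LEAST j. R y j)"
  have rx: "rx \<in> reps n F" "R x rx" "\<forall>j. R x j \<longrightarrow> rx \<le> j" using least_rep[OF xr(1)] unfolding rx_def by auto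
  have ry: "ry \<in> reps n F" "R y ry" "\<forall>j. R y j \<longrightarrow> ry \<le> j" using least_rep[OF xr(2)] unfolding ry_def by auto
  have rxy: "rx \<noteq> ry" using rx ry nxy by (meson Rs Rt)
  define m where "m = max rx ry"
  have repsM: "i \<in> reps n F \<Longrightarrow> i \<in> M \<Longrightarrow> i = rx \<or> i = ry" for i
  proof -
    assume i: "i \<in> reps n F" "i \<in> M"
    then have ile: "\<forall>j. R i j \<longrightarrow> i \<le> j" unfolding reps_def by auto
    show ?thesis
    proof (cases "R x i")
      case True
      then have "rx \<le> i" using rx by auto
      moreover have "i \<le> rx" using ile True rx(2) by (meson Rs Rt)
      ultimately show ?thesis by auto
    next
      case False
      then have "R y i" using i unfolding M_def by auto
      then have "ry \<le> i" using ry by auto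
      moreover have "i \<le> ry" using ile \<open>R y i\<close> ry(2) by (meson Rs Rt)
      ultimately show ?thesis by auto
    qed
  qed
  have rxM: "rx \<in> M" "ry \<in> M" using rx ry unfolding M_def by auto
  have reps2: "reps n F2 = reps n F - {m}"
  proof
    show "reps n F2 \<subseteq> reps n F - {m}"
    proof
      fix i assume i: "i \<in> reps n F2"
      then have i1: "i \<in> {1..n}" "\<forall>j. same_comp F2 i j \<longrightarrow> i \<le> j" unfolding reps_def by auto
      then have "\<forall>j. R i j \<longrightarrow> i \<le> j" using sc1 by auto
      then have "i \<in> reps n F" using i1 unfolding reps_def by auto
      moreover have "i \<noteq> m"
      proof
        assume "i = m"
        then have "same_comp F2 i (min rx ry)" using sc1 rxM by (auto simp: m_def min_def max_def)
        then have "i \<le> min rx ry" using i1 by auto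
        then show False using \<open>i = m\<close> rxy by (auto simp: m_def min_def max_def split: if_splits)
      qed
      ultimately show "i \<in> reps n F - {m}" by auto
    qed
  next
    show "reps n F - {m} \<subseteq> reps n F2"
    proof
      fix i assume i: "i \<in> reps n F - {m}"
      then have i1: "i \<in> {1..n}" "\<forall>j. R i j \<longrightarrow> i \<le> j" "i \<noteq> m" unfolding reps_def by auto
      have "i \<le> j" if "same_comp F2 i j" for j
      proof -
        have "R i j \<or> (i \<in> M \<and> j \<in> M)" using that sc1 by auto
        then show ?thesis
        proof
          assume "R i j" then show ?thesis using i1 by auto
        next
          assume ij: "i \<in> M \<and> j \<in> M"
          then have "i = rx \<or> i = ry" using repsM i by auto
          then have "i = min rx ry" using i1(3) rxy by (auto simp: m_def min_def max_def)
          moreover have "rx \<le> j \<or> ry \<le> j" using ij rx ry unfolding M_def by auto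
          ultimately show ?thesis by auto
        qed
      qed
      then show "i \<in> reps n F2" using i1 unfolding reps_def by auto
    qed
  qed
  have "m \<in> reps n F" using rx ry by (auto simp: m_def max_def)
  then have "card (reps n F2) + 1 = card (reps n F)"
    using reps2 finite_reps card_Diff_singleton
    by (metis One_nat_def Suc_pred add.right_neutral add_Suc_right card_gt_0_iff empty_iff)
  moreover have "\<forall>i j. same_comp F2 i j \<longrightarrow> R i j \<or> ((R x i \<or> R y i) \<and> (R x j \<or> R y j))"
    using sc1 unfolding M_def by auto
  ultimately show ?thesis using ncb2 strict by blast
qed


lemma chord_R: assumes "R u v" "R s t" "s \<noteq> u" "s \<noteq> v" "t \<noteq> u" "t \<noteq> v"
  "(min u v < s \<and> s < max u v) \<noteq> (min u v < t \<and> t < max u v)"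
  shows "R u s"
proof -
  define lo where "lo = min u v"
  define hi where "hi = max u v"
  have lh: "lo = u \<and> hi = v \<or> lo = v \<and> hi = u" unfolding lo_def hi_def by auto
  have Rlh: "R lo hi" using lh assms(1) Rs by auto
  have ne: "s \<noteq> lo" "s \<noteq> hi" "t \<noteq> lo" "t \<noteq> hi" using lh assms(3-6) by auto
  have sides: "(lo < s \<and> s < hi) \<noteq> (lo < t \<and> t < hi)" using assms(7) unfolding lo_def hi_def .
  have Rts: "R t s" using assms(2) Rs by auto
  have "R lo s"
  proof (cases "lo < s \<and> s < hi")
    case True
    then have "\<not> (lo < t \<and> t < hi)" using sides by auto
    then have "t < lo \<or> hi < t" using ne by linarith
    then show ?thesis
    proof
      assume "t < lo"
      then have "R t lo" using ncR[of t lo s hi] True Rts Rlh by auto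
      then show ?thesis using Rts by (meson Rs Rt)
    next
      assume "hi < t"
      then show ?thesis using ncR[of lo s hi t] True assms(2) Rlh by auto
    qed
  next
    case False
    then have T: "lo < t" "t < hi" using sides by auto
    then have "s < lo \<or> hi < s" using ne False by linarith
    then have "R lo t"
    proof
      assume "s < lo"
      then have "R s lo" using ncR[of s lo t hi] T assms(2) Rlh by auto
      then show ?thesis using assms(2) by (meson Rs Rt)
    next
      assume "hi < s"
      then show ?thesis using ncR[of lo t hi s] T Rts Rlh by auto
    qed
    then show ?thesis using assms(2) by (meson Rs Rt)
  qed
  then show ?thesis using lh Rlh by (meson Rs Rt)
qed

end

lemma sc_empty: "same_comp {} u v \<Longrightarrow> u = v"
  unfolding same_comp_def
  by (induction rule: rtranclp_induct) (auto simp: adj_def)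

lemma NC_empty: "simple_graph n E \<Longrightarrow> {} \<in> NC n E"
proof -
  assume sg: "simple_graph n E"
  have "same_comp {} i j \<longleftrightarrow> i = j" for i j using sc_empty by auto
  then show ?thesis using sg unfolding NC_def noncrossing_bond_def is_bond_def simple_graph_def by auto
qed

lemma reps_empty: "reps n {} = {1..n}"
  unfolding reps_def using sc_empty by auto

lemma ctx_of: "simple_graph n E \<Longrightarrow> tightly_closed n E \<Longrightarrow> F \<in> NC n E \<Longrightarrow> ctx n E F"
  unfolding ctx_def NC_def by auto

lemma reps_mono: "(\<And>i j. same_comp F i j \<Longrightarrow> same_comp F' i j) \<Longrightarrow> reps n F' \<subseteq> reps n F"
  unfolding reps_def by auto

lemma reps_le: "card (reps n F) \<le> n"
proof -
  have "card (reps n F) \<le> card {1..n}" by (rule card_mono) (auto simp: reps_def)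
  then show ?thesis by simp
qed

lemma reps_strict: assumes "ctx n E F" "ctx n E F'" "F \<subset> F'"
  shows "card (reps n F') < card (reps n F)"
proof -
  interpret A: ctx n E F by fact
  interpret B: ctx n E F' by fact
  have sub: "reps n F' \<subseteq> reps n F" using reps_mono[of F F'] sc_mono assms(3) by blast
  obtain a b where ab: "(a,b) \<in> F'" "(a,b) \<notin> F" using assms(3) by auto
  have abE: "(a,b) \<in> E" using ab B.FE by auto
  have R'ab: "same_comp F' a b" using ab(1) by (rule sc_edge)
  have nRab: "\<not> same_comp F a b" using ab abE A.ncb unfolding noncrossing_bond_def is_bond_def by blast
  have abn: "a \<in> {1..n}" "b \<in> {1..n}" using abE A.sg unfolding simple_graph_def by auto
  define ra where "ra = (LEAST j. same_comp F a j)"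
  define rb where "rb = (LEAST j. same_comp F b j)"
  have ra: "ra \<in> reps n F" "same_comp F a ra" using A.least_rep[OF abn(1)] unfolding ra_def by auto
  have rb: "rb \<in> reps n F" "same_comp F b rb" using A.least_rep[OF abn(2)] unfolding rb_def by auto
  have rab: "ra \<noteq> rb" using ra rb nRab by (meson sc_sym sc_trans)
  have R'r: "same_comp F' ra rb"
  proof -
    have "same_comp F' ra a" "same_comp F' b rb" using ra rb sc_mono[of F F'] assms(3) sc_sym by blast+
    then show ?thesis using R'ab by (meson sc_trans)
  qed
  define m where "m = max ra rb"
  have "m \<notin> reps n F'"
  proof
    assume "m \<in> reps n F'"
    moreover have "same_comp F' m (min ra rb)" using R'r sc_sym by (auto simp: m_def min_def max_def)
    ultimately have "m \<le> min ra rb" unfolding reps_def by auto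
    then show False using rab by (auto simp: m_def min_def max_def split: if_splits)
  qed
  moreover have "m \<in> reps n F" using ra rb by (auto simp: m_def max_def)
  ultimately have "reps n F' \<subset> reps n F" using sub by auto
  then show ?thesis by (rule psubset_card_mono[OF finite_reps])
qed


lemma L1: assumes sg: "simple_graph n E" and tc: "tightly_closed n E"
  and F: "F \<in> NC n E" and F': "F' \<in> NC n E" and FF': "F \<subset> F'"
  shows "\<exists>G \<in> NC n E. F \<subset> G \<and> G \<subseteq> F' \<and> card (reps n G) + 1 = card (reps n F)"
proof -
  interpret A: ctx n E F using ctx_of[OF sg tc F] .
  interpret B: ctx n E F' using ctx_of[OF sg tc F'] .
  have mono: "same_comp F i j \<Longrightarrow> same_comp F' i j" for i j using sc_mono[of F F'] FF' by blast
  obtain a b where ab: "(a,b) \<in> F'" "(a,b) \<notin> F" using FF' by auto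
  have abE: "(a,b) \<in> E" using ab B.FE by auto
  have adjab: "adj E a b" using abE unfolding adj_def by auto
  have R'ab: "same_comp F' a b" using ab(1) by (rule sc_edge)
  have nRab: "\<not> same_comp F a b" using ab abE A.ncb unfolding noncrossing_bond_def is_bond_def by blast
  define T where "T = {w. same_comp F' a w}"
  have Tcl: "\<And>i j. i \<in> T \<Longrightarrow> same_comp F i j \<Longrightarrow> j \<in> T"
    unfolding T_def using mono sc_trans by blast
  have Tcr: "s \<in> T" if "adj E u v" "u \<in> T" "v \<in> T" "same_comp F s t" "s \<noteq> u" "s \<noteq> v"
      "t \<noteq> u" "t \<noteq> v" "(min u v < s \<and> s < max u v) \<noteq> (min u v < t \<and> t < max u v)" for u v s t
  proof -
    have "same_comp F' u a" using that(2) sc_sym unfolding T_def by blast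
    then have "same_comp F' u v" using that(3) sc_trans unfolding T_def by blast
    moreover have "same_comp F' s t" using mono that(4) by blast
    ultimately have "same_comp F' u s" using B.chord_R that(5-9) by blast
    then show ?thesis using that(2) sc_trans[of F' a u s] unfolding T_def by blast
  qed
  have abT: "a \<in> T" "b \<in> T" using R'ab unfolding T_def by auto
  obtain u v where uv: "adj E u v" "u \<in> T" "v \<in> T" "\<not> same_comp F u v" "A.sepV u v = {}"
  proof -
    have Tcl': "\<forall>i j. i \<in> T \<longrightarrow> same_comp F i j \<longrightarrow> j \<in> T" using Tcl by blast
    have Tcr': "\<forall>u v s t. adj E u v \<longrightarrow> u \<in> T \<longrightarrow> v \<in> T \<longrightarrow> same_comp F s t \<longrightarrow> s \<noteq> u \<longrightarrow> s \<noteq> v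
      \<longrightarrow> t \<noteq> u \<longrightarrow> t \<noteq> v \<longrightarrow> (min u v < s \<and> s < max u v) \<noteq> (min u v < t \<and> t < max u v) \<longrightarrow> s \<in> T"
      using Tcr by blast
    show ?thesis using A.exists_good[of T, OF Tcl' Tcr' adjab abT nRab] that by blast
  qed
  obtain G where G: "noncrossing_bond n E G" "F \<subset> G" "card (reps n G) + 1 = card (reps n F)"
    "\<forall>i j. same_comp G i j \<longrightarrow> same_comp F i j \<or> ((same_comp F u i \<or> same_comp F v i) \<and> (same_comp F u j \<or> same_comp F v j))"
    using A.merge_exists[OF uv(1,4,5)] by blast
  have GF': "G \<subseteq> F'"
  proof
    fix e assume e: "e \<in> G"
    obtain i j where eij: "e = (i,j)" by (cases e)
    have "same_comp G i j" using e eij sc_edge by blast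
    then have "same_comp F i j \<or> ((same_comp F u i \<or> same_comp F v i) \<and> (same_comp F u j \<or> same_comp F v j))"
      using G(4) by blast
    then have "same_comp F' i j"
    proof
      assume "same_comp F i j" then show ?thesis using mono by blast
    next
      assume "(same_comp F u i \<or> same_comp F v i) \<and> (same_comp F u j \<or> same_comp F v j)"
      then have "i \<in> T" "j \<in> T" using Tcl uv(2,3) by blast+
      then show ?thesis unfolding T_def using sc_sym[of F' a i] sc_trans[of F' i a j] by blast
    qed
    moreover have "(i,j) \<in> E" using e eij G(1) unfolding noncrossing_bond_def is_bond_def by auto
    ultimately show "e \<in> F'" using B.ncb eij unfolding noncrossing_bond_def is_bond_def by blast
  qed
  show ?thesis using G GF' unfolding NC_def by auto
qed

lemma L2: assumes sg: "simple_graph n E" and tc: "tightly_closed n E"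
  and F: "F \<in> NC n E" and FE: "F \<noteq> E"
  shows "\<exists>G \<in> NC n E. F \<subset> G \<and> card (reps n G) + 1 = card (reps n F)"
proof -
  interpret A: ctx n E F using ctx_of[OF sg tc F] .
  obtain a b where ab: "(a,b) \<in> E" "(a,b) \<notin> F" using FE A.FE by auto
  have adjab: "adj E a b" using ab unfolding adj_def by auto
  have nRab: "\<not> same_comp F a b" using ab A.ncb unfolding noncrossing_bond_def is_bond_def by blast
  define T where "T = {1..n}"
  have Tcl: "\<And>i j. i \<in> T \<Longrightarrow> same_comp F i j \<Longrightarrow> j \<in> T"
    unfolding T_def using A.R_range by blast
  have Tcr: "s \<in> T" if "adj E u v" "u \<in> T" "v \<in> T" "same_comp F s t" "s \<noteq> u" "s \<noteq> v"
      "t \<noteq> u" "t \<noteq> v" "(min u v < s \<and> s < max u v) \<noteq> (min u v < t \<and> t < max u v)" for u v s t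
  proof -
    have "s \<noteq> t" using that(9) by auto
    then show ?thesis using A.R_range[OF that(4)] unfolding T_def by blast
  qed
  have abT: "a \<in> T" "b \<in> T" using A.adjE_range[OF adjab] unfolding T_def by auto
  obtain u v where uv: "adj E u v" "u \<in> T" "v \<in> T" "\<not> same_comp F u v" "A.sepV u v = {}"
  proof -
    have Tcl': "\<forall>i j. i \<in> T \<longrightarrow> same_comp F i j \<longrightarrow> j \<in> T" using Tcl by blast
    have Tcr': "\<forall>u v s t. adj E u v \<longrightarrow> u \<in> T \<longrightarrow> v \<in> T \<longrightarrow> same_comp F s t \<longrightarrow> s \<noteq> u \<longrightarrow> s \<noteq> v
      \<longrightarrow> t \<noteq> u \<longrightarrow> t \<noteq> v \<longrightarrow> (min u v < s \<and> s < max u v) \<noteq> (min u v < t \<and> t < max u v) \<longrightarrow> s \<in> T"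
      using Tcr by blast
    show ?thesis using A.exists_good[of T, OF Tcl' Tcr' adjab abT nRab] that by blast
  qed
  obtain G where G: "noncrossing_bond n E G" "F \<subset> G" "card (reps n G) + 1 = card (reps n F)"
    using A.merge_exists[OF uv(1,4,5)] by blast
  show ?thesis using G unfolding NC_def by auto
qed

lemma NC_sub: "F \<in> NC n E \<Longrightarrow> F \<subseteq> E"
  unfolding NC_def noncrossing_bond_def is_bond_def by auto

lemma finite_E: "simple_graph n E \<Longrightarrow> finite E"
  unfolding simple_graph_def
  by (rule finite_subset[of _ "{1..n} \<times> {1..n}"]) auto

lemma finite_NC: "simple_graph n E \<Longrightarrow> finite (NC n E)"
  using finite_E NC_sub by (metis Pow_iff finite_Pow_iff finite_subset subsetI)

lemma E_in_NC: assumes sg: "simple_graph n E" and tc: "tightly_closed n E"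
  shows "E \<in> NC n E"
proof -
  let ?f = "\<lambda>F. card (reps n F)"
  have fin: "finite (?f ` NC n E)" using finite_NC[OF sg] by auto
  have ne: "?f ` NC n E \<noteq> {}" using NC_empty[OF sg] by auto
  obtain F where F: "F \<in> NC n E" "?f F = Min (?f ` NC n E)" using Min_in[OF fin ne] by auto
  show ?thesis
  proof (rule ccontr)
    assume "E \<notin> NC n E"
    then have "F \<noteq> E" using F by auto
    then obtain G where G: "G \<in> NC n E" "?f G + 1 = ?f F" using L2[OF sg tc F(1)] by auto
    then have "?f F \<le> ?f G" using F(2) Min_le[OF fin] by auto
    then show False using G by auto
  qed
qed

lemma chain_card: assumes sg: "simple_graph n E" and tc: "tightly_closed n E"
  and C: "is_maximal_chain (NC n E) C"
  shows "card C = Suc n - card (reps n E)"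
proof -
  let ?P = "NC n E"
  let ?f = "\<lambda>F. card (reps n F)"
  have CP: "C \<subseteq> ?P" and comp: "\<And>x y. x \<in> C \<Longrightarrow> y \<in> C \<Longrightarrow> x \<subseteq> y \<or> y \<subseteq> x"
    using C unfolding is_maximal_chain_def is_chain_def by auto
  have maxl: "\<And>D. is_chain ?P D \<Longrightarrow> C \<subseteq> D \<Longrightarrow> D = C"
    using C unfolding is_maximal_chain_def by auto
  have EP: "E \<in> ?P" using E_in_NC[OF sg tc] .
  have ctxs: "\<And>F. F \<in> C \<Longrightarrow> ctx n E F" using ctx_of[OF sg tc] CP by auto
  have addC: "G \<in> C" if "G \<in> ?P" "\<And>H. H \<in> C \<Longrightarrow> H \<subseteq> G \<or> G \<subseteq> H" for G
  proof -
    have "is_chain ?P (insert G C)" unfolding is_chain_def using that CP comp by blast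
    then have "insert G C = C" using maxl by blast
    then show ?thesis by auto
  qed
  have emC: "{} \<in> C" using addC[OF NC_empty[OF sg]] by auto
  have EC: "E \<in> C" using addC[OF EP] CP NC_sub by blast
  have finC: "finite C" using finite_NC[OF sg] CP finite_subset by blast
  have strict: "?f G < ?f F" if "F \<in> C" "G \<in> C" "F \<subset> G" for F G
    using reps_strict[OF ctxs[OF that(1)] ctxs[OF that(2)] that(3)] .
  have inj: "inj_on ?f C"
  proof (rule inj_onI)
    fix F G assume FG: "F \<in> C" "G \<in> C" "?f F = ?f G"
    show "F = G"
    proof (rule ccontr)
      assume "F \<noteq> G"
      then have "F \<subset> G \<or> G \<subset> F" using comp FG by blast
      then show False using strict FG by force
    qed
  qed
  have fE_le: "?f E \<le> ?f F" if "F \<in> C" for F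
  proof -
    have "F \<subseteq> E" using that CP NC_sub by blast
    then have "reps n E \<subseteq> reps n F" using reps_mono[of F E n] sc_mono by blast
    then show ?thesis by (rule card_mono[OF finite_reps])
  qed
  have f0: "?f {} = n" using reps_empty by simp
  have img: "?f ` C = {?f E..n}"
  proof
    show "?f ` C \<subseteq> {?f E..n}" using fE_le reps_le by auto
  next
    show "{?f E..n} \<subseteq> ?f ` C"
    proof
      fix k assume k: "k \<in> {?f E..n}"
      show "k \<in> ?f ` C"
      proof (rule ccontr)
        assume nk: "k \<notin> ?f ` C"
        define A where "A = {F \<in> C. k < ?f F}"
        define B where "B = {F \<in> C. ?f F < k}"
        have "n \<noteq> k" using nk emC f0 by force
        then have emA: "{} \<in> A" using k emC f0 unfolding A_def by auto
        have "?f E \<noteq> k" using nk EC by force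
        then have EB: "E \<in> B" using k EC unfolding B_def by auto
        have finA: "finite (?f ` A)" and finB: "finite (?f ` B)" using finC unfolding A_def B_def by auto
        obtain F1 where F1: "F1 \<in> A" "?f F1 = Min (?f ` A)" using Min_in[OF finA] emA by fastforce
        obtain F2 where F2: "F2 \<in> B" "?f F2 = Max (?f ` B)" using Max_in[OF finB] EB by fastforce
        have F1min: "\<And>H. H \<in> A \<Longrightarrow> ?f F1 \<le> ?f H" using F1(2) Min_le[OF finA] by auto
        have F2max: "\<And>H. H \<in> B \<Longrightarrow> ?f H \<le> ?f F2" using F2(2) Max_ge[OF finB] by auto
        have F1C: "F1 \<in> C" "k < ?f F1" using F1 unfolding A_def by auto
        have F2C: "F2 \<in> C" "?f F2 < k" using F2 unfolding B_def by auto
        have "F1 \<subset> F2"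
        proof -
          have "F1 \<noteq> F2" using F1C F2C by auto
          moreover have "\<not> F2 \<subset> F1" using strict[OF F2C(1) F1C(1)] F1C F2C by auto
          ultimately show ?thesis using comp[OF F1C(1) F2C(1)] by auto
        qed
        then obtain G where G: "G \<in> ?P" "F1 \<subset> G" "G \<subseteq> F2" "?f G + 1 = ?f F1"
          using L1[OF sg tc CP[THEN subsetD, OF F1C(1)] CP[THEN subsetD, OF F2C(1)]] by blast
        have "G \<in> C"
        proof (rule addC[OF G(1)])
          fix H assume H: "H \<in> C"
          show "H \<subseteq> G \<or> G \<subseteq> H"
          proof (cases "H \<subseteq> F1")
            case True then show ?thesis using G(2) by auto
          next
            case False
            then have "F1 \<subset> H" using comp[OF H F1C(1)] by auto
            then have lt: "?f H < ?f F1" using strict[OF F1C(1) H] by auto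
            have "H \<notin> A" using F1min lt by force
            moreover have "?f H \<noteq> k" using nk H by force
            ultimately have "H \<in> B" using H unfolding A_def B_def by auto
            then have "?f H \<le> ?f F2" using F2max by auto
            then have "\<not> H \<subset> F2" using strict[OF H F2C(1)] by auto
            then have "F2 \<subseteq> H" using comp[OF H F2C(1)] by auto
            then show ?thesis using G(3) by auto
          qed
        qed
        moreover have "G \<notin> C"
        proof
          assume GC: "G \<in> C"
          have "?f G \<noteq> k" using nk GC by force
          then have "k < ?f G" using G(4) F1C(2) by auto
          then have "G \<in> A" using GC unfolding A_def by auto
          then show False using F1min G(4) by force
        qed
        ultimately show False by auto
      qed
    qed
  qed
  have "card C = card (?f ` C)" using card_image[OF inj] by simp
  also have "\<dots> = Suc n - ?f E" using img by simp
  finally show ?thesis .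
qed

theorem theorem5p15:
  fixes n :: nat and E :: "(nat \<times> nat) set"
  assumes "simple_graph n E"
    and "tightly_closed n E"
  shows "graded (NC n E)"
  unfolding graded_def using chain_card[OF assms] by auto

end
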